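(* Let $G=(V,E)$ be a connected graph on $n$ vertices with minimum degree $\delta(G)\geq 3$. Then $F(G)\geq \lfloor n/2\rfloor$. Moreover, if $G$ contains a cycle of even length, then $F(G)\geq \lceil n/2\rceil$.
   Context: All graphs are finite and simple. Given a graph $G=(V,E)$ and a set $S\subseteq V$ of filled vertices, the color change rule is: if a filled vertex $v$ has exactly one unfilled neighbor $w$, then $w$ becomes filled. The derived set of $S$ is the set of filled vertices obtained after applying the rule until no further application is possible. $S$ is a zero forcing set if its derived set is $V$; otherwise $S$ is a failed zero forcing set. The failed zero forcing number $F(G)$ is the maximum size of a failed zero forcing set of $G$. *)

theory Defs
  imports Main
begin

definition simple_graph :: "'a set \<Rightarrow> ('a \<Rightarrow> 'a \<Rightarrow> bool) \<Rightarrow> bool" where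
  "simple_graph V E \<longleftrightarrow> finite V \<and> (\<forall>u v. E u v \<longrightarrow> u \<in> V \<and> v \<in> V)
     \<and> (\<forall>u v. E u v \<longrightarrow> E v u) \<and> (\<forall>v. \<not> E v v)"

definition neighbors :: "'a set \<Rightarrow> ('a \<Rightarrow> 'a \<Rightarrow> bool) \<Rightarrow> 'a \<Rightarrow> 'a set" where
  "neighbors V E v = {u \<in> V. E v u}"

definition degree :: "'a set \<Rightarrow> ('a \<Rightarrow> 'a \<Rightarrow> bool) \<Rightarrow> 'a \<Rightarrow> nat" where
  "degree V E v = card (neighbors V E v)"

definition connected_graph :: "'a set \<Rightarrow> ('a \<Rightarrow> 'a \<Rightarrow> bool) \<Rightarrow> bool" where
  "connected_graph V E \<longleftrightarrow> V \<noteq> {} \<and> (\<forall>u\<in>V. \<forall>v\<in>V. E\<^sup>*\<^sup>* u v)"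

inductive_set derived_set :: "'a set \<Rightarrow> ('a \<Rightarrow> 'a \<Rightarrow> bool) \<Rightarrow> 'a set \<Rightarrow> 'a set"
  for V :: "'a set" and E :: "'a \<Rightarrow> 'a \<Rightarrow> bool" and S :: "'a set" where
  init: "v \<in> S \<Longrightarrow> v \<in> derived_set V E S"
| force: "\<lbrakk>u \<in> derived_set V E S; w \<in> neighbors V E u;
           \<forall>x \<in> neighbors V E u - {w}. x \<in> derived_set V E S\<rbrakk>
          \<Longrightarrow> w \<in> derived_set V E S"

definition zero_forcing_set :: "'a set \<Rightarrow> ('a \<Rightarrow> 'a \<Rightarrow> bool) \<Rightarrow> 'a set \<Rightarrow> bool" where
  "zero_forcing_set V E S \<longleftrightarrow> S \<subseteq> V \<and> derived_set V E S = V"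

definition failed_zero_forcing_set :: "'a set \<Rightarrow> ('a \<Rightarrow> 'a \<Rightarrow> bool) \<Rightarrow> 'a set \<Rightarrow> bool" where
  "failed_zero_forcing_set V E S \<longleftrightarrow> S \<subseteq> V \<and> derived_set V E S \<noteq> V"

definition failed_zf_number :: "'a set \<Rightarrow> ('a \<Rightarrow> 'a \<Rightarrow> bool) \<Rightarrow> nat" where
  "failed_zf_number V E = Max (card ` {S. failed_zero_forcing_set V E S})"

definition has_cycle_of_length :: "'a set \<Rightarrow> ('a \<Rightarrow> 'a \<Rightarrow> bool) \<Rightarrow> nat \<Rightarrow> bool" where
  "has_cycle_of_length V E k \<longleftrightarrow> k \<ge> 3 \<and> (\<exists>xs. length xs = k \<and> distinct xs \<and> set xs \<subseteq> V
      \<and> (\<forall>i<k. E (xs ! i) (xs ! ((i + 1) mod k))))"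

end

theory Submission
  imports Defs
begin

lemma fort:
  assumes SV: "S \<subseteq> V" and ne: "V - S \<noteq> {}"
    and two: "\<forall>u\<in>S. card (neighbors V E u - S) \<ge> 2"
    and fin: "finite V"
  shows "failed_zero_forcing_set V E S"
proof -
  have "derived_set V E S \<subseteq> S"
  proof
    fix x assume "x \<in> derived_set V E S" thus "x \<in> S"
    proof (induction rule: derived_set.induct)
      case (init v) thus ?case .
    next
      case (force u w)
      show ?case
      proof (rule ccontr)
        assume "w \<notin> S"
        have c: "card (neighbors V E u - S) \<ge> 2" using two force.IH by blast
        have "\<not> (neighbors V E u - S \<subseteq> {w})"
        proof
          assume "neighbors V E u - S \<subseteq> {w}"
          then have "card (neighbors V E u - S) \<le> card {w}" by (intro card_mono) auto
          with c show False by simp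
        qed
        then obtain y where y: "y \<in> neighbors V E u" "y \<notin> S" "y \<noteq> w" by blast
        then show False using force.IH by blast
      qed
    qed
  qed
  then have "derived_set V E S \<noteq> V" using ne by blast
  then show ?thesis using SV unfolding failed_zero_forcing_set_def by blast
qed

lemma le_fzf:
  assumes "failed_zero_forcing_set V E S" "finite V"
  shows "card S \<le> failed_zf_number V E"
proof -
  have "{S. failed_zero_forcing_set V E S} \<subseteq> Pow V"
    unfolding failed_zero_forcing_set_def by blast
  then have "finite {S. failed_zero_forcing_set V E S}"
    using assms(2) finite_subset by blast
  then show ?thesis unfolding failed_zf_number_def
    using assms(1) by (intro Max_ge) auto
qed

definition cutp :: "'a set \<Rightarrow> ('a \<Rightarrow> 'a \<Rightarrow> bool) \<Rightarrow> 'a set \<Rightarrow> ('a \<times> 'a) set" where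
  "cutp V E X = {(u,w). u \<in> V \<and> w \<in> V \<and> E u w \<and> ((u \<in> X) \<noteq> (w \<in> X))}"

lemma cut_decomp:
  assumes sg: "simple_graph V E" and v: "v \<in> V"
  shows "card (cutp V E X) = card {p \<in> cutp V E X. fst p \<noteq> v \<and> snd p \<noteq> v}
     + 2 * card {w \<in> neighbors V E v. (w \<in> X) \<noteq> (v \<in> X)}"
proof -
  let ?Q = "{p \<in> cutp V E X. fst p \<noteq> v \<and> snd p \<noteq> v}"
  let ?O = "{w \<in> neighbors V E v. (w \<in> X) \<noteq> (v \<in> X)}"
  have fin: "finite V" using sg unfolding simple_graph_def by blast
  have finc: "finite (cutp V E X)"
    by (rule finite_subset[of _ "V \<times> V"]) (auto simp: cutp_def fin)
  have eq: "cutp V E X = ?Q \<union> ((\<lambda>w. (v,w)) ` ?O \<union> (\<lambda>w. (w,v)) ` ?O)"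
    using sg v unfolding cutp_def neighbors_def simple_graph_def by auto
  have finO: "finite ?O" using fin unfolding neighbors_def by auto
  have d1: "?Q \<inter> ((\<lambda>w. (v,w)) ` ?O \<union> (\<lambda>w. (w,v)) ` ?O) = {}" by auto
  have d2: "(\<lambda>w. (v,w)) ` ?O \<inter> (\<lambda>w. (w,v)) ` ?O = {}"
    using sg unfolding neighbors_def simple_graph_def by auto
  have c1: "card ((\<lambda>w. (v,w)) ` ?O) = card ?O" by (rule card_image) (auto simp: inj_on_def)
  have c2: "card ((\<lambda>w. (w,v)) ` ?O) = card ?O" by (rule card_image) (auto simp: inj_on_def)
  have fQ: "finite ?Q" using finc by auto
  have "card (cutp V E X) = card ?Q + card ((\<lambda>w. (v,w)) ` ?O \<union> (\<lambda>w. (w,v)) ` ?O)"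
    by (subst eq, rule card_Un_disjoint) (use fQ finO d1 in auto)
  also have "card ((\<lambda>w. (v,w)) ` ?O \<union> (\<lambda>w. (w,v)) ` ?O) = 2 * card ?O"
    by (subst card_Un_disjoint) (use finO d2 c1 c2 in auto)
  finally show ?thesis .
qed

lemma max_cut_exists:
  assumes sg: "simple_graph V E" and deg: "\<forall>v\<in>V. degree V E v \<ge> 3"
  obtains A where "A \<subseteq> V" "\<forall>v\<in>V. card {w \<in> neighbors V E v. (w \<in> A) \<noteq> (v \<in> A)} \<ge> 2"
proof -
  have fin: "finite V" using sg unfolding simple_graph_def by blast
  let ?f = "\<lambda>X. card (cutp V E X)"
  have "finite (?f ` Pow V)" using fin by auto
  moreover have "?f ` Pow V \<noteq> {}" by auto
  ultimately have "Max (?f ` Pow V) \<in> ?f ` Pow V" by (rule Max_in)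
  then obtain A where A: "A \<subseteq> V" "?f A = Max (?f ` Pow V)" by auto
  have maxA: "\<And>B. B \<subseteq> V \<Longrightarrow> ?f B \<le> ?f A"
    using A(2) \<open>finite (?f ` Pow V)\<close> by (metis Max_ge PowI image_eqI)
  show ?thesis
  proof (rule that[OF A(1)], intro ballI)
    fix v assume v: "v \<in> V"
    define A' where "A' = (if v \<in> A then A - {v} else insert v A)"
    have A'V: "A' \<subseteq> V" using A(1) v unfolding A'_def by auto
    let ?O = "{w \<in> neighbors V E v. (w \<in> A) \<noteq> (v \<in> A)}"
    let ?O' = "{w \<in> neighbors V E v. (w \<in> A') \<noteq> (v \<in> A')}"
    let ?S = "{w \<in> neighbors V E v. (w \<in> A) = (v \<in> A)}"
    have vn: "v \<notin> neighbors V E v" using sg unfolding simple_graph_def neighbors_def by auto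
    have O'S: "?O' = ?S"
    proof -
      have "\<And>w. w \<in> neighbors V E v \<Longrightarrow> ((w \<in> A') \<noteq> (v \<in> A')) = ((w \<in> A) = (v \<in> A))"
        using vn unfolding A'_def by (auto split: if_splits)
      then show ?thesis by blast
    qed
    have Q: "{p \<in> cutp V E A'. fst p \<noteq> v \<and> snd p \<noteq> v} = {p \<in> cutp V E A. fst p \<noteq> v \<and> snd p \<noteq> v}"
      unfolding cutp_def A'_def by auto
    have "?f A' \<le> ?f A" using maxA A'V .
    then have "card ?S \<le> card ?O"
      using cut_decomp[OF sg v, of A] cut_decomp[OF sg v, of A'] Q O'S by simp
    moreover have "card (neighbors V E v) = card ?S + card ?O"
    proof -
      have e: "neighbors V E v = ?S \<union> ?O" by auto
      have "finite (neighbors V E v)" using fin unfolding neighbors_def by auto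
      then have "finite ?S" "finite ?O" by auto
      then have "card (?S \<union> ?O) = card ?S + card ?O" by (rule card_Un_disjoint) auto
      then show ?thesis using e by simp
    qed
    moreover have "card (neighbors V E v) \<ge> 3" using deg v unfolding degree_def by auto
    ultimately show "card ?O \<ge> 2" by linarith
  qed
qed

theorem theorem1:
  fixes V :: "'a set" and E :: "'a \<Rightarrow> 'a \<Rightarrow> bool"
  assumes "simple_graph V E"
    and "connected_graph V E"
    and "\<forall>v\<in>V. degree V E v \<ge> 3"
  shows "failed_zf_number V E \<ge> card V div 2 \<and>
         ((\<exists>k. even k \<and> has_cycle_of_length V E k) \<longrightarrow> failed_zf_number V E \<ge> (card V + 1) div 2)"
proof -
  have fin: "finite V" using assms(1) unfolding simple_graph_def by blast
  obtain A where AV: "A \<subseteq> V" and two: "\<forall>v\<in>V. card {w \<in> neighbors V E v. (w \<in> A) \<noteq> (v \<in> A)} \<ge> 2"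
    using max_cut_exists[OF assms(1) assms(3)] by blast
  obtain v where v: "v \<in> V" using assms(2) unfolding connected_graph_def by blast
  have twoA: "\<forall>u\<in>A. card (neighbors V E u - A) \<ge> 2"
  proof
    fix u assume u: "u \<in> A"
    have "{w \<in> neighbors V E u. (w \<in> A) \<noteq> (u \<in> A)} = neighbors V E u - A" using u by auto
    then show "card (neighbors V E u - A) \<ge> 2" proof -
      have "u \<in> V" using u AV by blast
      then have "card {w \<in> neighbors V E u. (w \<in> A) \<noteq> (u \<in> A)} \<ge> 2" using two by blast
      with \<open>{w \<in> neighbors V E u. (w \<in> A) \<noteq> (u \<in> A)} = neighbors V E u - A\<close> show ?thesis by simp
    qed
  qed
  have twoB: "\<forall>u\<in>V - A. card (neighbors V E u - (V - A)) \<ge> 2"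
  proof
    fix u assume u: "u \<in> V - A"
    have "{w \<in> neighbors V E u. (w \<in> A) \<noteq> (u \<in> A)} = neighbors V E u - (V - A)"
      using u unfolding neighbors_def by auto
    then show "card (neighbors V E u - (V - A)) \<ge> 2" using two u by auto
  qed
  have sidesne: "A \<noteq> {} \<and> V - A \<noteq> {}"
  proof -
    have c: "card {w \<in> neighbors V E v. (w \<in> A) \<noteq> (v \<in> A)} \<ge> 2" using two v by blast
    then have "{w \<in> neighbors V E v. (w \<in> A) \<noteq> (v \<in> A)} \<noteq> {}" by (metis card.empty not_numeral_le_zero)
    then obtain w where "w \<in> neighbors V E v" "(w \<in> A) \<noteq> (v \<in> A)" by blast
    then show ?thesis using v unfolding neighbors_def by auto
  qed
  have f1: "card A \<le> failed_zf_number V E"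
    by (rule le_fzf[OF fort[OF AV _ twoA fin] fin]) (use sidesne in blast)
  have f2: "card (V - A) \<le> failed_zf_number V E"
    by (rule le_fzf[OF fort[of "V - A" V E] fin]) (use sidesne twoB fin AV in auto)
  have "card A + card (V - A) = card V"
    using card_Diff_subset[OF finite_subset[OF AV fin] AV] card_mono[OF fin AV] by linarith
  then have "failed_zf_number V E \<ge> (card V + 1) div 2" using f1 f2 by linarith
  then show ?thesis by auto
qed

end
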